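(* Consider a system of $M$ conservation laws with state space $\mathcal D\subset\mathbb R^M$, interface-normal flux $\mathbf f:\mathcal D\to\mathbb R^M$, entropy variables $\mathbf v=(v^1,\dots,v^M):\mathcal D\to\mathbb R^M$ and entropy flux potential $\Psi:\mathcal D\to\mathbb R$, and let $\mathbf f^{\mathrm{EC}}=(f^{\mathrm{EC},1},\dots,f^{\mathrm{EC},M}):\mathcal D\times\mathcal D\to\mathbb R^M$ be an entropy conservative two-point flux, i.e. $(\mathbf v(\mathbf u_R)-\mathbf v(\mathbf u_L))^T\mathbf f^{\mathrm{EC}}(\mathbf u_L,\mathbf u_R)=\Psi(\mathbf u_R)-\Psi(\mathbf u_L)$ for all $\mathbf u_L,\mathbf u_R\in\mathcal D$. Let $N_L,N_R\ge1$, let $\mathbf M_L\in\mathbb R^{(N_L+1)\times(N_L+1)}$, $\mathbf M_R\in\mathbb R^{(N_R+1)\times(N_R+1)}$ be diagonal with positive diagonal entries, and let $\mathbf P_{L2R}\in\mathbb R^{(N_R+1)\times(N_L+1)}$, $\mathbf P_{R2L}\in\mathbb R^{(N_L+1)\times(N_R+1)}$ satisfy $\mathbf P_{R2L}^T\mathbf M_L=\mathbf M_R\mathbf P_{L2R}$, $\mathbf P_{L2R}\mathbf 1^L=\mathbf 1^R$ and $\mathbf P_{R2L}\mathbf 1^R=\mathbf 1^L$. Let $\mathbf U^L_0,\dots,\mathbf U^L_{N_L}\in\mathcal D$ and $\mathbf U^R_0,\dots,\mathbf U^R_{N_R}\in\mathcal D$ be arbitrary (the left and right interface states). For $q=1,\dots,M$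 define $\mathbf F^q\in\mathbb R^{(N_L+1)\times(N_R+1)}$ by $[\mathbf F^q]_{ij}=f^{\mathrm{EC},q}(\mathbf U^L_i,\mathbf U^R_j)$ and the numerical surface fluxes $$\mathbf F^{q,L}:=\mathbb E\big(\mathbf P_{R2L}(\mathbf F^q)^T\big)\in\mathbb R^{N_L+1},\qquad \mathbf F^{q,R}:=\mathbb E\big(\mathbf P_{L2R}\mathbf F^q\big)\in\mathbb R^{N_R+1},$$ i.e. $F^{q,L}_i=\sum_{j=0}^{N_R}[\mathbf P_{R2L}]_{ij}f^{\mathrm{EC},q}(\mathbf U^L_i,\mathbf U^R_j)$ and $F^{q,R}_j=\sum_{i=0}^{N_L}[\mathbf P_{L2R}]_{ji}f^{\mathrm{EC},q}(\mathbf U^L_i,\mathbf U^R_j)$. Let $V^{q,L}_i=v^q(\mathbf U^L_i)$, $\Psi^L_i=\Psi(\mathbf U^L_i)$, $V^{q,R}_j=v^q(\mathbf U^R_j)$, $\Psi^R_j=\Psi(\mathbf U^R_j)$. Then these fluxes are primary and entropy conservative at the interface: for every $q=1,\dots,M$, $$\Delta U^q:=(\mathbf 1^R)^T\mathbf M_R\mathbf F^{q,R}-(\mathbf 1^L)^T\mathbf M_L\mathbf F^{q,L}=0,$$ and $$\Delta S:=\sum_{q=1}^M(\mathbf V^{q,R})^T\mathbf M_R\mathbf F^{q,R}-(\mathbf 1^R)^T\mathbf M_R\boldsymbol\Psi^R-\sum_{q=1}^M(\mathbf V^{q,L})^T\mathbf M_L\mathbf F^{q,L}+(\mathbf 1^L)^T\mathbf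 M_L\boldsymbol\Psi^L=0.$$
   Context: Setting: a nodal discontinuous Galerkin spectral element method (collocated on Legendre–Gauss–Lobatto nodes, so derivative/mass matrices satisfy the summation-by-parts property) for a hyperbolic system $\mathbf u_t+\mathbf f(\mathbf u)_x+\mathbf g(\mathbf u)_y=0$ with a strongly convex entropy $S(\mathbf u)$, entropy variables $\mathbf v=\partial S/\partial\mathbf u$, entropy flux $F$ (with $\mathbf v^T\mathbf f'(\mathbf u)=F'(\mathbf u)$) and entropy flux potential $\Psi=\mathbf v\cdot\mathbf f-F$. Two neighboring elements $L$ (left) and $R$ (right) share one full interface edge (same edge length, no hanging nodes) but may have different polynomial degrees $N_L,N_R$; $\mathbf M_L,\mathbf M_R$ are their 1D quadrature weight matrices on the interface. When entropy conservative volume fluxes are used, the rate of change of the total integral of the $q$-th conserved variable and of the total entropy receive, from this interface, exactly the contributions $\Delta U^q$ and $\Delta S$ (up to a common positive geometric factor); "primary and entropy conservative" means these vanish. Notation: for a square matrix $\mathbf W$, $\mathbb E(\mathbf W)$ is the vector of its diagonal entries; $\mathbf 1^L\in\mathbb R^{N_L+1}$, $\mathbf 1^R\in\mathbb R^{N_R+1}$ are all-ones vectors; $\boldsymbol\Psi^L,\boldsymbol\Psi^R,\mathbf V^{q,L},\mathbf V^{q,R}$ are the vectors with the indicated entries. *)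

theory Defs
  imports "HOL-Analysis.Analysis"
begin

text \<open>Finite-dimensional vectors/matrices of varying size are represented by
 index functions (nat-indexed, 0-based) with explicit bounds. \<close>

definition pos_diag :: "nat \<Rightarrow> (nat \<Rightarrow> nat \<Rightarrow> real) \<Rightarrow> bool" where
  "pos_diag n W \<longleftrightarrow> (\<forall>i\<le>n. \<forall>j\<le>n. i \<noteq> j \<longrightarrow> W i j = 0) \<and> (\<forall>i\<le>n. W i i > 0)"

definition entropy_conservative ::
  "nat \<Rightarrow> 'a set \<Rightarrow> ('a \<Rightarrow> nat \<Rightarrow> real) \<Rightarrow> ('a \<Rightarrow> real) \<Rightarrow> ('a \<Rightarrow> 'a \<Rightarrow> nat \<Rightarrow> real) \<Rightarrow> bool" where
  "entropy_conservative m D v Psi fEC \<longleftrightarrow>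
     (\<forall>uL\<in>D. \<forall>uR\<in>D. (\<Sum>q=1..m. (v uR q - v uL q) * fEC uL uR q) = Psi uR - Psi uL)"

end

theory Submission
  imports Defs
begin


lemma diag_col:
  assumes "pos_diag n W" "i \<le> n"
  shows "(\<Sum>k=0..n. a k * W k i) = a i * W i i"
proof -
  have "(\<Sum>k=0..n. a k * W k i) = (\<Sum>k\<in>{i}. a k * W k i)"
    by (rule sum.mono_neutral_right) (use assms in \<open>auto simp: pos_diag_def\<close>)
  thus ?thesis by simp
qed

lemma diag_row:
  assumes "pos_diag n W" "i \<le> n"
  shows "(\<Sum>k=0..n. W i k * b k) = W i i * b i"
proof -
  have "(\<Sum>k=0..n. W i k * b k) = (\<Sum>k\<in>{i}. W i k * b k)"
    by (rule sum.mono_neutral_right) (use assms in \<open>auto simp: pos_diag_def\<close>)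
  thus ?thesis by simp
qed

lemma swap3:
  "(\<Sum>q\<in>A. \<Sum>j\<in>B. \<Sum>i\<in>C. f q j i) = (\<Sum>j\<in>B. \<Sum>i\<in>C. \<Sum>q\<in>A. f q j i)"
  by (subst sum.swap) (rule sum.cong[OF refl], rule sum.swap)

lemma diag_dbl:
  assumes "pos_diag n W"
  shows "(\<Sum>j=0..n. \<Sum>k=0..n. W j k * g j k) = (\<Sum>k=0..n. W k k * g k k)"
  by (rule sum.cong[OF refl]) (use diag_row[OF assms, of _ "g _"] in auto)

theorem theorem1:
  fixes m NL NR :: nat
    and D :: "'a set"
    and v :: "'a \<Rightarrow> nat \<Rightarrow> real"
    and Psi :: "'a \<Rightarrow> real"
    and fEC :: "'a \<Rightarrow> 'a \<Rightarrow> nat \<Rightarrow> real"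
    and WL WR PL2R PR2L :: "nat \<Rightarrow> nat \<Rightarrow> real"
    and UL UR :: "nat \<Rightarrow> 'a"
  assumes EC: "entropy_conservative m D v Psi fEC"
    and NL: "NL \<ge> 1" and NR: "NR \<ge> 1"
    and massL_diag: "pos_diag NL WL" and massR_diag: "pos_diag NR WR"
    and compat: "\<forall>i\<le>NR. \<forall>j\<le>NL.
        (\<Sum>k=0..NL. PR2L k i * WL k j) = (\<Sum>k=0..NR. WR i k * PL2R k j)"
    and PL2R_one: "\<forall>j\<le>NR. (\<Sum>i=0..NL. PL2R j i) = 1"
    and PR2L_one: "\<forall>i\<le>NL. (\<Sum>j=0..NR. PR2L i j) = 1"
    and UL_D: "\<forall>i\<le>NL. UL i \<in> D"
    and UR_D: "\<forall>j\<le>NR. UR j \<in> D"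
  defines "FL \<equiv> (\<lambda>q i. \<Sum>j=0..NR. PR2L i j * fEC (UL i) (UR j) q)"
    and "FR \<equiv> (\<lambda>q j. \<Sum>i=0..NL. PL2R j i * fEC (UL i) (UR j) q)"
  shows "(\<forall>q\<in>{1..m}.
           (\<Sum>j=0..NR. \<Sum>k=0..NR. WR j k * FR q k)
         - (\<Sum>i=0..NL. \<Sum>k=0..NL. WL i k * FL q k) = 0)
       \<and> (\<Sum>q=1..m. \<Sum>j=0..NR. \<Sum>k=0..NR. v (UR j) q * WR j k * FR q k)
         - (\<Sum>j=0..NR. \<Sum>k=0..NR. WR j k * Psi (UR k))
         - (\<Sum>q=1..m. \<Sum>i=0..NL. \<Sum>k=0..NL. v (UL i) q * WL i k * FL q k)
         + (\<Sum>i=0..NL. \<Sum>k=0..NL. WL i k * Psi (UL k)) = 0"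
  
proof -
  define c where "c i j = WL i i * PR2L i j" for i j
  have cR: "WR j j * PL2R j i = c i j" if "i \<le> NL" "j \<le> NR" for i j
  proof -
    have "(\<Sum>k=0..NL. PR2L k j * WL k i) = (\<Sum>k=0..NR. WR j k * PL2R k i)"
      using compat that by blast
    thus ?thesis using diag_col[OF massL_diag that(1), of "\<lambda>k. PR2L k j"]
        diag_row[OF massR_diag that(2), of "\<lambda>k. PL2R k i"] by (simp add: c_def mult.commute)
  qed
  have R1: "(\<Sum>j=0..NR. \<Sum>k=0..NR. WR j k * FR q k) = (\<Sum>j=0..NR. \<Sum>i=0..NL. c i j * fEC (UL i) (UR j) q)" for q
  proof -
    have "(\<Sum>j=0..NR. \<Sum>k=0..NR. WR j k * FR q k) = (\<Sum>k=0..NR. WR k k * FR q k)"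
      using diag_dbl[OF massR_diag, of "\<lambda>j k. FR q k"] by simp
    also have "\<dots> = (\<Sum>j=0..NR. \<Sum>i=0..NL. (WR j j * PL2R j i) * fEC (UL i) (UR j) q)"
      by (simp add: FR_def sum_distrib_left mult.assoc)
    also have "\<dots> = (\<Sum>j=0..NR. \<Sum>i=0..NL. c i j * fEC (UL i) (UR j) q)"
      using cR by (intro sum.cong refl) auto
    finally show ?thesis .
  qed
  have L1: "(\<Sum>i=0..NL. \<Sum>k=0..NL. WL i k * FL q k) = (\<Sum>j=0..NR. \<Sum>i=0..NL. c i j * fEC (UL i) (UR j) q)" for q
  proof -
    have "(\<Sum>i=0..NL. \<Sum>k=0..NL. WL i k * FL q k) = (\<Sum>k=0..NL. WL k k * FL q k)"
      using diag_dbl[OF massL_diag, of "\<lambda>j k. FL q k"] by simp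
    also have "\<dots> = (\<Sum>i=0..NL. \<Sum>j=0..NR. c i j * fEC (UL i) (UR j) q)"
      by (simp add: FL_def c_def sum_distrib_left mult.assoc)
    also have "\<dots> = (\<Sum>j=0..NR. \<Sum>i=0..NL. c i j * fEC (UL i) (UR j) q)"
      by (rule sum.swap)
    finally show ?thesis .
  qed
  have R2: "(\<Sum>q=1..m. \<Sum>j=0..NR. \<Sum>k=0..NR. v (UR j) q * WR j k * FR q k)
      = (\<Sum>j=0..NR. \<Sum>i=0..NL. c i j * (\<Sum>q=1..m. v (UR j) q * fEC (UL i) (UR j) q))"
  proof -
    have "(\<Sum>q=1..m. \<Sum>j=0..NR. \<Sum>k=0..NR. v (UR j) q * WR j k * FR q k)
       = (\<Sum>q=1..m. \<Sum>k=0..NR. WR k k * (v (UR k) q * FR q k))"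
      using diag_dbl[OF massR_diag, of "\<lambda>j k. v (UR j) q * FR q k" for q]
      by (simp add: mult.commute mult.left_commute)
    also have "\<dots> = (\<Sum>q=1..m. \<Sum>j=0..NR. \<Sum>i=0..NL. (WR j j * PL2R j i) * (v (UR j) q * fEC (UL i) (UR j) q))"
      by (simp add: FR_def sum_distrib_left mult.assoc mult.left_commute)
    also have "\<dots> = (\<Sum>q=1..m. \<Sum>j=0..NR. \<Sum>i=0..NL. c i j * (v (UR j) q * fEC (UL i) (UR j) q))"
      using cR by (intro sum.cong refl) auto
    also have "\<dots> = (\<Sum>j=0..NR. \<Sum>i=0..NL. c i j * (\<Sum>q=1..m. v (UR j) q * fEC (UL i) (UR j) q))"
      unfolding sum_distrib_left by (rule swap3)
    finally show ?thesis .
  qed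
  have L2: "(\<Sum>q=1..m. \<Sum>i=0..NL. \<Sum>k=0..NL. v (UL i) q * WL i k * FL q k)
      = (\<Sum>j=0..NR. \<Sum>i=0..NL. c i j * (\<Sum>q=1..m. v (UL i) q * fEC (UL i) (UR j) q))"
  proof -
    have "(\<Sum>q=1..m. \<Sum>i=0..NL. \<Sum>k=0..NL. v (UL i) q * WL i k * FL q k)
       = (\<Sum>q=1..m. \<Sum>k=0..NL. WL k k * (v (UL k) q * FL q k))"
      using diag_dbl[OF massL_diag, of "\<lambda>j k. v (UL j) q * FL q k" for q]
      by (simp add: mult.commute mult.left_commute)
    also have "\<dots> = (\<Sum>q=1..m. \<Sum>i=0..NL. \<Sum>j=0..NR. c i j * (v (UL i) q * fEC (UL i) (UR j) q))"
      by (simp add: FL_def c_def sum_distrib_left mult.assoc mult.left_commute)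
    also have "\<dots> = (\<Sum>i=0..NL. \<Sum>j=0..NR. c i j * (\<Sum>q=1..m. v (UL i) q * fEC (UL i) (UR j) q))"
      unfolding sum_distrib_left by (rule swap3)
    also have "\<dots> = (\<Sum>j=0..NR. \<Sum>i=0..NL. c i j * (\<Sum>q=1..m. v (UL i) q * fEC (UL i) (UR j) q))"
      by (rule sum.swap)
    finally show ?thesis .
  qed
  have PR: "(\<Sum>j=0..NR. \<Sum>k=0..NR. WR j k * Psi (UR k)) = (\<Sum>j=0..NR. \<Sum>i=0..NL. c i j * Psi (UR j))"
  proof -
    have "(\<Sum>j=0..NR. \<Sum>k=0..NR. WR j k * Psi (UR k)) = (\<Sum>j=0..NR. WR j j * Psi (UR j))"
      using diag_dbl[OF massR_diag, of "\<lambda>j k. Psi (UR k)"] by simp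
    also have "\<dots> = (\<Sum>j=0..NR. \<Sum>i=0..NL. (WR j j * PL2R j i) * Psi (UR j))"
      using PL2R_one by (intro sum.cong refl) (simp add: sum_distrib_left[symmetric] sum_distrib_right[symmetric] mult.assoc)
    also have "\<dots> = (\<Sum>j=0..NR. \<Sum>i=0..NL. c i j * Psi (UR j))"
      using cR by (intro sum.cong refl) auto
    finally show ?thesis .
  qed
  have PL: "(\<Sum>i=0..NL. \<Sum>k=0..NL. WL i k * Psi (UL k)) = (\<Sum>j=0..NR. \<Sum>i=0..NL. c i j * Psi (UL i))"
  proof -
    have "(\<Sum>i=0..NL. \<Sum>k=0..NL. WL i k * Psi (UL k)) = (\<Sum>i=0..NL. WL i i * Psi (UL i))"
      using diag_dbl[OF massL_diag, of "\<lambda>j k. Psi (UL k)"] by simp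
    also have "\<dots> = (\<Sum>i=0..NL. \<Sum>j=0..NR. c i j * Psi (UL i))"
      using PR2L_one by (intro sum.cong refl) (simp add: c_def sum_distrib_left[symmetric] sum_distrib_right[symmetric] mult.assoc)
    also have "\<dots> = (\<Sum>j=0..NR. \<Sum>i=0..NL. c i j * Psi (UL i))"
      by (rule sum.swap)
    finally show ?thesis .
  qed
  have ECij: "(\<Sum>q=1..m. v (UR j) q * fEC (UL i) (UR j) q) - (\<Sum>q=1..m. v (UL i) q * fEC (UL i) (UR j) q)
      = Psi (UR j) - Psi (UL i)" if "i \<le> NL" "j \<le> NR" for i j
    using EC UL_D UR_D that unfolding entropy_conservative_def
    by (auto simp: sum_subtractf[symmetric] left_diff_distrib)
  have "(\<Sum>j=0..NR. \<Sum>i=0..NL. c i j * (\<Sum>q=1..m. v (UR j) q * fEC (UL i) (UR j) q))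
      - (\<Sum>j=0..NR. \<Sum>i=0..NL. c i j * Psi (UR j))
      - (\<Sum>j=0..NR. \<Sum>i=0..NL. c i j * (\<Sum>q=1..m. v (UL i) q * fEC (UL i) (UR j) q))
      + (\<Sum>j=0..NR. \<Sum>i=0..NL. c i j * Psi (UL i))
      = (\<Sum>j=0..NR. \<Sum>i=0..NL. c i j * (((\<Sum>q=1..m. v (UR j) q * fEC (UL i) (UR j) q)
           - (\<Sum>q=1..m. v (UL i) q * fEC (UL i) (UR j) q)) - (Psi (UR j) - Psi (UL i))))"
    by (simp only: sum_subtractf[symmetric] sum.distrib[symmetric]) (intro sum.cong refl, simp add: sum_subtractf right_diff_distrib)
  also have "\<dots> = 0"
    using ECij by (intro sum.neutral) auto
  finally have S: "(\<Sum>j=0..NR. \<Sum>i=0..NL. c i j * (\<Sum>q=1..m. v (UR j) q * fEC (UL i) (UR j) q))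
      - (\<Sum>j=0..NR. \<Sum>i=0..NL. c i j * Psi (UR j))
      - (\<Sum>j=0..NR. \<Sum>i=0..NL. c i j * (\<Sum>q=1..m. v (UL i) q * fEC (UL i) (UR j) q))
      + (\<Sum>j=0..NR. \<Sum>i=0..NL. c i j * Psi (UL i)) = 0" .
  show ?thesis using R1 L1 R2 L2 PR PL S by simp
qed

end
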